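(* Let $\alpha \in [0, 1/10)$, let $G$ be an abelian group, let $A$ be a non-empty finite subset of $G$, and let $H$ be a finite subgroup of $G$. If $d(U_A, U_H) \le \alpha$, then there exists $x \in G$ such that \[|A \,\Delta\, (H + \{x\})| \le 10\, \alpha\, |H|.\]
   Context: $\log$ is the natural logarithm. For a random variable $X$ with finite range $R$, $\mathbb{H}(X) = -\sum_{x\in R}\mathbb{P}(X=x)\log \mathbb{P}(X=x)$ is its Shannon entropy. For a non-empty finite set $A$, $U_A$ denotes a random variable uniformly distributed on $A$. For random variables $X,Y$ with finite range in an abelian group, the entropic Ruzsa distance is $d(X,Y) = \mathbb{H}(X'+Y') - (\mathbb{H}(X')+\mathbb{H}(Y'))/2$, where $X',Y'$ are independent with the same distributions as $X,Y$ respectively. $\Delta$ denotes symmetric difference and $H+\{x\}=\{h+x: h\in H\}$. *)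

theory Defs
  imports "HOL-Probability.Probability"
begin

definition entropy_pmf :: "'a pmf \<Rightarrow> real" where
  "entropy_pmf p = - (\<Sum>x\<in>set_pmf p. pmf p x * ln (pmf p x))"

text \<open>Entropic Ruzsa distance d(X,Y) where X, Y have distributions p, q:
  H(X'+Y') - (H(X') + H(Y'))/2 with X', Y' independent.\<close>
definition ruzsa_dist :: "'a::ab_group_add pmf \<Rightarrow> 'a pmf \<Rightarrow> real" where
  "ruzsa_dist p q =
     entropy_pmf (map_pmf (\<lambda>(x, y). x + y) (pair_pmf p q))
     - (entropy_pmf p + entropy_pmf q) / 2"

definition add_subgroup :: "'a::ab_group_add set \<Rightarrow> bool" where
  "add_subgroup H \<longleftrightarrow> 0 \<in> H \<and> (\<forall>x\<in>H. \<forall>y\<in>H. x + y \<in> H) \<and> (\<forall>x\<in>H. - x \<in> H)"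

end

theory Submission
  imports Defs
begin

lemma sum_eq_bind: "map_pmf (\<lambda>(x, y). x + y) (pair_pmf p q) = bind_pmf p (\<lambda>a. map_pmf (\<lambda>b. a+b) (q::'a::ab_group_add pmf))"
  by (simp add: pair_pmf_def map_bind_pmf map_pmf_def[symmetric] bind_return_pmf pmf.map_comp o_def)

lemma entropy_uniform:
  assumes "finite A" "A \<noteq> {}"
  shows "entropy_pmf (pmf_of_set A) = ln (card A)"
proof -
  have "card A > 0" using assms by (simp add: card_gt_0_iff)
  have "entropy_pmf (pmf_of_set A) = - (\<Sum>x\<in>A. (1 / real (card A)) * ln (1 / real (card A)))"
    unfolding entropy_pmf_def using assms by (simp add: set_pmf_of_set pmf_of_set)
  also have "\<dots> = ln (card A)" using \<open>card A > 0\<close> by (simp add: ln_div)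
  finally show ?thesis .
qed

lemma entropy_lower:
  assumes "finite (set_pmf p)" "\<And>y. pmf p y \<le> M"
  shows "entropy_pmf p \<ge> - ln M"
proof -
  have s1: "(\<Sum>x\<in>set_pmf p. pmf p x) = 1" using assms(1) by (rule sum_pmf_eq_1) simp
  have "(\<Sum>x\<in>set_pmf p. pmf p x * ln (pmf p x)) \<le> (\<Sum>x\<in>set_pmf p. pmf p x * ln M)"
  proof (rule sum_mono)
    fix x assume "x \<in> set_pmf p"
    then have "pmf p x > 0" by (simp add: pmf_positive)
    then have "ln (pmf p x) \<le> ln M" using assms(2)[of x] by simp
    then show "pmf p x * ln (pmf p x) \<le> pmf p x * ln M" using \<open>pmf p x > 0\<close> by simp
  qed
  also have "\<dots> = ln M" using s1 by (simp add: sum_distrib_right[symmetric])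
  finally show ?thesis unfolding entropy_pmf_def by simp
qed

lemma pmf_sum:
  fixes A H :: "'a::ab_group_add set"
  assumes "finite A" "A \<noteq> {}" "finite H" "add_subgroup H"
  shows "pmf (map_pmf (\<lambda>(x, y). x + y) (pair_pmf (pmf_of_set A) (pmf_of_set H))) y
     = real (card (A \<inter> (\<lambda>h. h + y) ` H)) / (real (card A) * real (card H))"
proof -
  have H0: "H \<noteq> {}" using assms(4) unfolding add_subgroup_def by auto
  have m: "map_pmf (\<lambda>b. a+b) (pmf_of_set H) = pmf_of_set ((\<lambda>b. a+b) ` H)" for a
    by (rule map_pmf_of_set_inj) (use assms H0 in auto)
  have ci: "card ((\<lambda>b. a+b) ` H) = card H" for a by (simp add: card_image)
  have iff: "(y \<in> (\<lambda>b. a+b) ` H) = (a \<in> (\<lambda>h. h + y) ` H)" for a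
  proof
    assume "y \<in> (\<lambda>b. a+b) ` H"
    then obtain b where "b \<in> H" "y = a + b" by auto
    then have "-b \<in> H" "a = -b + y" using assms(4) unfolding add_subgroup_def by (auto simp: algebra_simps)
    then show "a \<in> (\<lambda>h. h + y) ` H" by blast
  next
    assume "a \<in> (\<lambda>h. h + y) ` H"
    then obtain b where "b \<in> H" "a = b + y" by auto
    then have "-b \<in> H" "y = a + -b" using assms(4) unfolding add_subgroup_def by (auto simp: algebra_simps)
    then show "y \<in> (\<lambda>b. a+b) ` H" by blast
  qed
  have "pmf (map_pmf (\<lambda>(x, y). x + y) (pair_pmf (pmf_of_set A) (pmf_of_set H))) y
     = (\<Sum>a\<in>A. indicator ((\<lambda>b. a+b) ` H) y / real (card H)) / real (card A)"
    unfolding sum_eq_bind using assms H0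
    by (simp add: pmf_bind_pmf_of_set m pmf_of_set ci)
  also have "(\<Sum>a\<in>A. indicator ((\<lambda>b. a+b) ` H) y / real (card H)) = (\<Sum>a\<in>A. indicator ((\<lambda>h. h + y) ` H) a) / real (card H)"
    by (simp add: sum_divide_distrib[symmetric] indicator_def iff)
  also have "(\<Sum>a\<in>A. indicator ((\<lambda>h. h + y) ` H) a) = real (card (A \<inter> (\<lambda>h. h + y) ` H))"
    using assms(1) by (simp add: indicator_def sum.If_cases Int_def)
  finally show ?thesis by simp
qed

lemma real_ineq:
  fixes n h a L1 L2 \<alpha> :: real
  assumes "0 < a" "a \<le> n" "a \<le> h" "1 - a/n \<le> L1" "1 - a/h \<le> L2" "L1 + L2 \<le> 2*\<alpha>" "\<alpha> < 1/10"
  shows "n + h - 2*a \<le> 10*\<alpha>*h"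
proof -
  have n0: "n > 0" "h > 0" using assms by auto
  have e1: "n - a \<le> n * L1" using assms(4) n0 by (simp add: field_simps)
  have e2: "h - a \<le> h * L2" using assms(5) n0 by (simp add: field_simps)
  have L2: "L2 \<ge> 0" using assms(3,5) n0 by (smt (verit) divide_le_eq_1)
  have L1: "L1 \<ge> 0" using assms(2,4) n0 by (smt (verit) divide_le_eq_1)
  have "L1 < 1/5" using assms L2 by linarith
  then have "1 - a/n < 1/5" using assms(4) by linarith
  then have "n < 5/4 * a" using n0 by (simp add: field_simps)
  then have "n \<le> 5 * h" using assms(1,3) by linarith
  then have "n * L1 \<le> 5 * h * L1" using L1 by (simp add: mult_right_mono)
  then have "n + h - 2*a \<le> 5*h*L1 + h*L2" using e1 e2 by linarith
  also have "\<dots> \<le> 5*h*(L1+L2)" using L2 n0 by (simp add: algebra_simps)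
  also have "\<dots> \<le> 5*h*(2*\<alpha>)" using assms(6) n0 by simp
  finally show ?thesis by (simp add: algebra_simps)
qed

theorem mainTheorem3:
  fixes \<alpha> :: real and A H :: "'a::ab_group_add set"
  assumes "0 \<le> \<alpha>" and "\<alpha> < 1/10"
    and "finite A" and "A \<noteq> {}"
    and "finite H" and "add_subgroup H"
    and "ruzsa_dist (pmf_of_set A) (pmf_of_set H) \<le> \<alpha>"
  shows "\<exists>x. real (card ((A - (\<lambda>h. h + x) ` H) \<union> ((\<lambda>h. h + x) ` H - A)))
               \<le> 10 * \<alpha> * real (card H)"
proof -
  have H0: "H \<noteq> {}" using assms(6) unfolding add_subgroup_def by auto
  define q where "q = map_pmf (\<lambda>(x, y). x + y) (pair_pmf (pmf_of_set A) (pmf_of_set H))"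
  have Sq: "set_pmf q = (\<lambda>(x, y). x + y) ` (A \<times> H)"
    unfolding q_def using assms H0 by (simp add: set_pair_pmf)
  have fin: "finite (set_pmf q)" unfolding Sq using assms by simp
  define M where "M = Max (pmf q ` set_pmf q)"
  have "M \<in> pmf q ` set_pmf q" unfolding M_def using fin set_pmf_not_empty[of q] by (intro Max_in) auto
  then obtain x where x: "x \<in> set_pmf q" "pmf q x = M" by auto
  have Mpos: "M > 0" using x pmf_positive[of x q] by simp
  have Mge: "pmf q y \<le> M" for y
  proof (cases "y \<in> set_pmf q")
    case True then show ?thesis unfolding M_def using fin by simp
  next
    case False then show ?thesis using Mpos by (simp add: set_pmf_iff)
  qed
  define B where "B = (\<lambda>h. h + x) ` H"
  define a where "a = card (A \<inter> B)"
  define n where "n = card A"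
  define k where "k = card H"
  have n0: "n > 0" "k > 0" using assms H0 unfolding n_def k_def by (auto simp: card_gt_0_iff)
  have cB: "card B = k" unfolding B_def k_def by (simp add: card_image)
  have finB: "finite B" unfolding B_def using assms by simp
  have Mq: "M = real a / (real n * real k)"
    using x(2) pmf_sum[OF assms(3,4,5,6), of x] unfolding q_def a_def B_def n_def k_def by simp
  have a0: "a > 0" using Mpos Mq n0 by (cases "a = 0") auto
  have an: "a \<le> n" unfolding a_def n_def using assms(3) by (simp add: card_mono)
  have ak: "a \<le> k" unfolding a_def cB[symmetric] using finB by (simp add: card_mono)
  have ent: "entropy_pmf q \<ge> - ln M" using entropy_lower[OF fin Mge] .
  have lnM: "- ln M = ln n + ln k - ln a" using a0 n0 unfolding Mq by (simp add: ln_div ln_mult)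
  have r: "entropy_pmf q - (ln n + ln k) / 2 \<le> \<alpha>"
    using assms(7) unfolding ruzsa_dist_def q_def[symmetric] using assms(3,4,5) H0
    by (simp add: entropy_uniform n_def k_def)
  have d: "ln n + ln k - ln a - (ln n + ln k) / 2 \<le> \<alpha>" using r ent lnM by linarith
  have l1: "1 - a/n \<le> ln (n/a)"
    using ln_le_minus_one[of "a/n"] a0 n0 by (simp add: ln_div)
  have l2: "1 - a/k \<le> ln (k/a)"
    using ln_le_minus_one[of "a/k"] a0 n0 by (simp add: ln_div)
  have "ln (n/a) + ln (k/a) = ln n + ln k - 2*ln a" using a0 n0 by (simp add: ln_div)
  moreover have "ln n + ln k - 2*ln a \<le> 2*\<alpha>" using d by (simp add: field_simps)
  ultimately have "ln (n/a) + ln (k/a) \<le> 2*\<alpha>" by linarith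
  from real_ineq[OF _ _ _ l1 l2 this assms(2)] a0 an ak
  have ineq: "real n + real k - 2 * real a \<le> 10 * \<alpha> * real k" by simp
  have "card ((A - B) \<union> (B - A)) = card (A - B) + card (B - A)"
    using assms(3) finB by (intro card_Un_disjoint) auto
  also have "card (A - B) = n - a" unfolding n_def a_def using assms(3) by (simp add: card_Diff_subset_Int Diff_Int2 card_Diff_subset)
  also have "card (B - A) = k - a" unfolding cB[symmetric] a_def using finB by (metis card_Diff_subset_Int Diff_Int2 Int_commute card_Diff_subset inf_le1 finite_Int)
  finally have "real (card ((A - B) \<union> (B - A))) = real n + real k - 2 * real a" using an ak by simp
  then show ?thesis using ineq unfolding B_def k_def by (intro exI[of _ x]) simp
qed

end
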